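(* Let $V=[v_1,\dots,v_k],W=[w_1,\dots,w_k]\in\mathbb{R}^{d\times k}$, let $1\le i\le k$ with $w_i\ne0$, let $\gamma\in(0,1/2]$ and $R\ge2$. Let $\hat w_i=w_i/\|w_i\|_2$, $u=v_i-(v_i^\top\hat w_i)\hat w_i$, and, if $u\ne0$, $\hat u=u/\|u\|_2$. Let $\mathscr{E}=\mathscr{E}_{i,\gamma,R}$ be the event over $x\sim\mathcal{N}(0,I_d)$ that \[ 1\le\frac{x^\top\hat w_i}{R\sqrt{\log(1/\gamma)}}\le2\quad\text{and}\quad1\le\frac{x^\top\hat u}{2\sqrt{\log(1/\gamma)}}\le2, \] where, if $u=0$, the condition on $x^\top\hat u$ is omitted. Then $\Pr[\mathscr{E}]\ge\gamma^{28+6R^2}$. *)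

theory Defs
  imports "HOL-Analysis.Analysis" "HOL-Probability.Probability"
begin

definition std_gaussian :: "('d::finite) itself \<Rightarrow> (real^'d) measure" where
  "std_gaussian _ = distr (PiM UNIV (\<lambda>_::'d. density lborel std_normal_density))
                          borel (\<lambda>f. \<chi> j. f j)"

end

theory Submission
  imports Defs
begin

typedef ('a::finite) wo = "{..<CARD('a)}" morphisms rep_wo abs_wo
  by (rule exI[of _ 0]) simp

instantiation wo :: (finite) linorder
begin
definition "less_eq_wo (x::'a wo) (y::'a wo) \<longleftrightarrow> rep_wo x \<le> rep_wo y"
definition "less_wo (x::'a wo) (y::'a wo) \<longleftrightarrow> rep_wo x < rep_wo y"
instance by standard (auto simp: less_eq_wo_def less_wo_def rep_wo_inject)
end

instance wo :: (finite) finite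
proof
  have "(UNIV :: 'a wo set) = abs_wo ` {..<CARD('a)}"
    by (metis type_definition.Abs_image type_definition_wo)
  then show "finite (UNIV :: 'a wo set)" by (metis finite_imageI finite_lessThan)
qed

instance wo :: (finite) wellorder
proof
  fix P :: "'a wo \<Rightarrow> bool" and a :: "'a wo"
  assume H: "\<And>x. (\<And>y. y < x \<Longrightarrow> P y) \<Longrightarrow> P x"
  have "\<And>x. rep_wo x = n \<Longrightarrow> P x" for n
    by (induction n rule: less_induct) (metis H less_wo_def)
  then show "P a" by blast
qed

lemma card_wo: "CARD('a::finite wo) = CARD('a)"
proof -
  have "(UNIV :: 'a wo set) = abs_wo ` {..<CARD('a)}"
    by (metis type_definition.Abs_image type_definition_wo)
  moreover have "inj_on (abs_wo :: nat \<Rightarrow> 'a wo) {..<CARD('a)}"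
    by (metis abs_wo_inverse inj_onI)
  ultimately show ?thesis by (metis card_image card_lessThan)
qed

lemma exists_bij_wo: "\<exists>f :: 'a::finite wo \<Rightarrow> 'a. bij f"
  using bij_betw_iff_card[of "UNIV :: 'a wo set" "UNIV :: 'a set"] card_wo by auto

lemma lborel_orth_wo:
  fixes T :: "real^'n::{finite,wellorder} \<Rightarrow> real^'n::_"
  assumes T: "orthogonal_transformation T"
  shows "distr lborel borel T = lborel"
proof (rule lborel_eqI[symmetric])
  have bijT: "bij T" using T orthogonal_transformation_bij by blast
  have oi: "orthogonal_transformation (inv T)" using T orthogonal_transformation_inv by blast
  have lin: "linear T" using T orthogonal_transformation_linear by blast
  have [measurable]: "T \<in> borel_measurable borel"
    using lin by (simp add: borel_measurable_continuous_onI linear_continuous_on linear_linear)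
  fix l u :: "real^'n::{finite,wellorder}"
  have pre: "T -` box l u = inv T ` box l u" by (simp add: bij_vimage_eq_inv_image bijT)
  have bl: "box l u \<in> lmeasurable" by simp
  have b2: "T -` box l u \<in> lmeasurable" unfolding pre using measurable_orthogonal_image[OF oi bl] .
  have sb: "T -` box l u \<in> sets borel" using measurable_sets_borel[of T borel "box l u"] by simp
  have "emeasure (distr lborel borel T) (box l u) = emeasure lborel (T -` box l u)"
    by (simp add: emeasure_distr)
  also have "\<dots> = emeasure lebesgue (T -` box l u)"
    using sb by (simp add: emeasure_completion)
  also have "\<dots> = ennreal (measure lebesgue (T -` box l u))"
    using b2 by (simp add: emeasure_eq_measure2)
  also have "\<dots> = ennreal (measure lebesgue (box l u))"
    unfolding pre using measure_orthogonal_image[OF oi bl] by simp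
  also have "\<dots> = emeasure lebesgue (box l u)"
    using bl by (simp add: emeasure_eq_measure2)
  also have "\<dots> = emeasure lborel (box l u)"
    by (simp add: emeasure_completion)
  finally have eq: "emeasure (distr lborel borel T) (box l u) = emeasure lborel (box l u)" .
  assume "\<And>b. b \<in> Basis \<Longrightarrow> l \<bullet> b \<le> u \<bullet> b"
  then show "emeasure (distr lborel borel T) (box l u) = (\<Prod>b\<in>Basis. (u - l) \<bullet> b)"
    unfolding eq by (simp add: emeasure_lborel_box_eq)
qed simp

lemma prod_Basis_vec: "(\<Prod>b\<in>(Basis::(real^'n) set). f b) = (\<Prod>i\<in>UNIV. f (axis i 1))"
proof -
  have e: "(Basis::(real^'n) set) = (\<lambda>i. axis i 1) ` UNIV" by (auto simp: Basis_vec_def)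
  have i: "inj (\<lambda>i::'n. axis i (1::real))" by (auto intro!: injI simp: axis_eq_axis)
  show ?thesis unfolding e by (subst prod.reindex[OF i]) simp
qed

lemma perm_inner:
  fixes \<sigma> :: "'m::finite \<Rightarrow> 'n::finite" assumes "bij \<sigma>"
  shows "(\<chi> k. x $ \<sigma> k) \<bullet> (\<chi> k. y $ \<sigma> k) = (x::real^'n) \<bullet> y"
  unfolding inner_vec_def using sum.reindex_bij_betw[OF assms, of "\<lambda>j. x $ j \<bullet> y $ j"] by simp

lemma perm_linear:
  fixes \<sigma> :: "'m::finite \<Rightarrow> 'n::finite"
  shows "linear (\<lambda>x::real^'n. (\<chi> k. x $ \<sigma> k) :: real^'m)"
  by (rule linearI) (simp_all add: vec_eq_iff)

lemma linear_borel: "linear (f :: 'a::euclidean_space \<Rightarrow> 'b::euclidean_space) \<Longrightarrow> f \<in> borel_measurable borel"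
  by (simp add: borel_measurable_continuous_onI linear_continuous_on linear_linear)

lemma lborel_perm:
  fixes \<sigma> :: "'m::finite \<Rightarrow> 'n::finite" assumes bs: "bij \<sigma>"
  shows "distr lborel borel (\<lambda>x::real^'n. (\<chi> k. x $ \<sigma> k) :: real^'m) = lborel"
proof (rule lborel_eqI[symmetric])
  let ?P = "\<lambda>x::real^'n. (\<chi> k. x $ \<sigma> k) :: real^'m"
  have [measurable]: "?P \<in> borel_measurable borel" by (rule linear_borel[OF perm_linear])
  fix l u :: "real^'m"
  assume le: "\<And>b. b \<in> Basis \<Longrightarrow> l \<bullet> b \<le> u \<bullet> b"
  have le': "l $ k \<le> u $ k" for k using le[of "axis k 1"] by (auto simp: Basis_vec_def inner_axis)
  let ?l = "(\<chi> j. l $ inv \<sigma> j) :: real^'n" and ?u = "(\<chi> j. u $ inv \<sigma> j) :: real^'n"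
  have pre: "?P -` box l u = box ?l ?u"
  proof -
    have "(\<forall>k. l $ k < x $ \<sigma> k \<and> x $ \<sigma> k < u $ k) \<longleftrightarrow> (\<forall>j. l $ inv \<sigma> j < x $ j \<and> x $ j < u $ inv \<sigma> j)" for x
      by (metis bs bij_inv_eq_iff)
    then show ?thesis by (auto simp: mem_box_cart)
  qed
  have "emeasure (distr lborel borel ?P) (box l u) = emeasure lborel (box ?l ?u)"
    by (simp add: emeasure_distr pre[symmetric])
  also have "\<dots> = (\<Prod>j\<in>UNIV. u $ inv \<sigma> j - l $ inv \<sigma> j)"
  proof -
    have "\<forall>b\<in>Basis. ?l \<bullet> b \<le> ?u \<bullet> b" using le' by (auto simp: Basis_vec_def inner_axis)
    then show ?thesis by (simp add: emeasure_lborel_box_eq prod_Basis_vec inner_axis)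
  qed
  also have "\<dots> = (\<Prod>k\<in>UNIV. u $ k - l $ k)"
    using prod.reindex_bij_betw[OF bij_imp_bij_inv[OF bs], of "\<lambda>k. u $ k - l $ k"] by simp
  also have "\<dots> = (\<Prod>b\<in>Basis. (u - l) \<bullet> b)"
    by (simp add: prod_Basis_vec inner_axis)
  finally show "emeasure (distr lborel borel ?P) (box l u) = ennreal (\<Prod>b\<in>Basis. (u - l) \<bullet> b)" .
qed simp

lemma lborel_orth:
  fixes T :: "real^'d::finite \<Rightarrow> real^'d"
  assumes T: "orthogonal_transformation T"
  shows "distr lborel borel T = lborel"
proof -
  obtain \<sigma> :: "'d wo \<Rightarrow> 'd" where bs: "bij \<sigma>" using exists_bij_wo by blast
  define P where "P = (\<lambda>x::real^'d. (\<chi> k. x $ \<sigma> k) :: real^'d wo)"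
  define Q where "Q = (\<lambda>x::real^'d wo. (\<chi> k. x $ inv \<sigma> k) :: real^'d)"
  have bs': "bij (inv \<sigma>)" using bs bij_imp_bij_inv by blast
  have linP: "linear P" unfolding P_def by (rule perm_linear)
  have linQ: "linear Q" unfolding Q_def by (rule perm_linear)
  have linT: "linear T" using T orthogonal_transformation_linear by blast
  have [measurable]: "P \<in> borel_measurable borel" "Q \<in> borel_measurable borel" "T \<in> borel_measurable borel"
    using linP linQ linT linear_borel by blast+
  have hP: "distr lborel borel P = lborel" unfolding P_def by (rule lborel_perm[OF bs])
  have QP: "Q (P x) = x" for x unfolding P_def Q_def using bs by (simp add: vec_eq_iff bij_inv_eq_iff surj_f_inv_f bij_is_surj bij_is_inj)
  have PQ: "P (Q x) = x" for x unfolding P_def Q_def using bs by (simp add: vec_eq_iff bij_inv_eq_iff surj_f_inv_f bij_is_surj bij_is_inj)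
  have hQ: "distr lborel borel Q = lborel"
  proof -
    have "distr lborel borel Q = distr (distr lborel borel P) borel Q" by (simp add: hP)
    also have "\<dots> = distr lborel borel (Q \<circ> P)" by (subst distr_distr) simp_all
    also have "Q \<circ> P = id" using QP by auto
    finally show ?thesis by (simp add: distr_id2)
  qed
  define T' where "T' = P \<circ> T \<circ> Q"
  have oT': "orthogonal_transformation T'"
    unfolding orthogonal_transformation T'_def
  proof (intro conjI allI)
    show "linear (P \<circ> T \<circ> Q)" using linP linQ linT by (simp add: linear_compose)
    fix v
    have nP: "norm (P x) = norm x" for x
      unfolding norm_eq_sqrt_inner P_def using perm_inner[OF bs] by simp
    have nQ: "norm (Q x) = norm x" for x
      unfolding norm_eq_sqrt_inner Q_def using perm_inner[OF bs'] by simp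
    show "norm ((P \<circ> T \<circ> Q) v) = norm v"
      using nP nQ T by (simp add: orthogonal_transformation)
  qed
  have hT': "distr lborel borel T' = lborel" by (rule lborel_orth_wo[OF oT'])
  have [measurable]: "T' \<in> borel_measurable borel" unfolding T'_def by simp
  have eq: "T \<circ> Q = Q \<circ> T'" unfolding T'_def using QP by auto
  have "distr lborel borel T = distr (distr lborel borel Q) borel T" by (simp add: hQ)
  also have "\<dots> = distr lborel borel (T \<circ> Q)" by (subst distr_distr) simp_all
  also have "\<dots> = distr lborel borel (Q \<circ> T')" by (simp add: eq)
  also have "\<dots> = distr (distr lborel borel T') borel Q" by (subst distr_distr) simp_all
  also have "\<dots> = lborel" by (simp add: hT' hQ)
  finally show ?thesis .
qed


lemma vec_lambda_meas:
  assumes "\<And>i. sets (M i) = sets (borel :: real measure)"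
  shows "(\<lambda>f. (\<chi> j. f j) :: real^'d::finite) \<in> borel_measurable (PiM UNIV M)"
proof -
  have "(\<lambda>f. f i) \<in> borel_measurable (PiM UNIV M)" for i
  proof -
    have "measurable (PiM UNIV M) (M i) = measurable (PiM UNIV M) borel"
      by (rule measurable_cong_sets[OF refl assms])
    moreover have "(\<lambda>f. f i) \<in> measurable (PiM UNIV M) (M i)"
      by (rule measurable_component_singleton) simp
    ultimately show ?thesis by simp
  qed
  then have "\<forall>i\<in>Basis. (\<lambda>f. (\<chi> j. f j) \<bullet> i) \<in> borel_measurable (PiM UNIV M)"
    by (simp add: Basis_vec_def inner_axis)
  then show ?thesis
    by (rule borel_measurable_euclidean_space[THEN iffD2])
qed

lemma lborel_vec_PiM:
  "distr (PiM UNIV (\<lambda>_. lborel)) borel (\<lambda>f. (\<chi> j. f j) :: real^'d::finite) = lborel"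
proof (rule lborel_eqI[symmetric])
  interpret product_sigma_finite "\<lambda>_::'d. lborel :: real measure" ..
  have [measurable]: "(\<lambda>f. (\<chi> j. f j) :: real^'d::finite) \<in> borel_measurable (PiM UNIV (\<lambda>_. lborel))"
    by (rule vec_lambda_meas) simp
  fix l u :: "real^'d"
  assume le: "\<And>b. b \<in> Basis \<Longrightarrow> l \<bullet> b \<le> u \<bullet> b"
  have le': "l $ k \<le> u $ k" for k using le[of "axis k 1"] by (auto simp: Basis_vec_def inner_axis)
  have pre: "(\<lambda>f. (\<chi> j. f j) :: real^'d) -` box l u \<inter> space (PiM UNIV (\<lambda>_. lborel)) = PiE UNIV (\<lambda>j. {l $ j <..< u $ j})"
    by (auto simp: mem_box_cart space_PiM PiE_iff)
  have "emeasure (distr (PiM UNIV (\<lambda>_. lborel)) borel (\<lambda>f. (\<chi> j. f j) :: real^'d)) (box l u)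
     = emeasure (PiM UNIV (\<lambda>_. lborel)) (PiE UNIV (\<lambda>j. {l $ j <..< u $ j}))"
    by (simp add: emeasure_distr pre)
  also have "\<dots> = (\<Prod>j\<in>UNIV. emeasure lborel {l $ j <..< u $ j})"
    by (rule emeasure_PiM) auto
  also have "\<dots> = (\<Prod>j\<in>UNIV. ennreal (u $ j - l $ j))"
    using le' by simp
  also have "\<dots> = ennreal (\<Prod>b\<in>Basis. (u - l) \<bullet> b)"
    using le' by (simp add: prod_Basis_vec inner_axis prod_ennreal)
  finally show "emeasure (distr (PiM UNIV (\<lambda>_. lborel)) borel (\<lambda>f. (\<chi> j. f j) :: real^'d)) (box l u) = ennreal (\<Prod>b\<in>Basis. (u - l) \<bullet> b)" .
qed simp



lemma indicator_PiE_UNIV: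
  "(indicator (PiE UNIV (A :: 'i::finite \<Rightarrow> _)) x :: ennreal) = (\<Prod>j\<in>UNIV. indicator (A j) (x j))"
proof (cases "x \<in> PiE UNIV A")
  case True then show ?thesis by (auto simp: indicator_def PiE_iff)
next
  case False
  then obtain j where "x j \<notin> A j" by (auto simp: PiE_iff)
  then have "(\<Prod>j\<in>UNIV. indicator (A j) (x j) :: ennreal) = 0"
    by (intro prod_zero bexI[of _ j]) auto
  then show ?thesis using False by simp
qed

lemma PiM_std_density:
  "PiM UNIV (\<lambda>_::'d::finite. density lborel std_normal_density) =
   density (PiM UNIV (\<lambda>_. lborel)) (\<lambda>f. \<Prod>j\<in>UNIV. ennreal (std_normal_density (f j)))"
proof -
  interpret N: product_sigma_finite "\<lambda>_::'d. density lborel std_normal_density"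
    unfolding product_sigma_finite_def
    using prob_space_normal_density[of 1 0] prob_space_imp_sigma_finite by simp
  interpret L: product_sigma_finite "\<lambda>_::'d. lborel :: real measure" ..
  show ?thesis
  proof (rule N.PiM_eqI[symmetric])
    show "finite (UNIV :: 'd set)" by simp
    show "sets (density (PiM UNIV (\<lambda>_. lborel)) (\<lambda>f. \<Prod>j\<in>UNIV. ennreal (std_normal_density (f j))))
        = sets (PiM UNIV (\<lambda>_::'d. density lborel std_normal_density))"
      by (simp cong: sets_PiM_cong)
    fix A :: "'d \<Rightarrow> real set"
    assume A: "\<And>i. i \<in> UNIV \<Longrightarrow> A i \<in> sets (density lborel std_normal_density)"
    then have A': "A i \<in> sets borel" for i by simp
    have PA: "PiE UNIV A \<in> sets (PiM UNIV (\<lambda>_::'d. lborel :: real measure))"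
      using A' by (intro sets_PiM_I_finite) auto
    have "emeasure (density (PiM UNIV (\<lambda>_. lborel)) (\<lambda>f. \<Prod>j\<in>UNIV. ennreal (std_normal_density (f j)))) (PiE UNIV A)
       = (\<integral>\<^sup>+ x. (\<Prod>j\<in>UNIV. ennreal (std_normal_density (x j))) * indicator (PiE UNIV A) x \<partial>PiM UNIV (\<lambda>_. lborel))"
      using PA by (subst emeasure_density) auto
    also have "\<dots> = (\<integral>\<^sup>+ x. (\<Prod>j\<in>UNIV. ennreal (std_normal_density (x j)) * indicator (A j) (x j)) \<partial>PiM UNIV (\<lambda>_. lborel))"
      by (intro nn_integral_cong) (simp add: indicator_PiE_UNIV prod.distrib)
    also have "\<dots> = (\<Prod>j\<in>UNIV. (\<integral>\<^sup>+ y. ennreal (std_normal_density y) * indicator (A j) y \<partial>lborel))"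
      using A' by (subst L.product_nn_integral_prod) auto
    also have "\<dots> = (\<Prod>j\<in>UNIV. emeasure (density lborel std_normal_density) (A j))"
      using A' by (intro prod.cong refl) (simp add: emeasure_density)
    finally show "emeasure (density (PiM UNIV (\<lambda>_. lborel)) (\<lambda>f. \<Prod>j\<in>UNIV. ennreal (std_normal_density (f j)))) (PiE UNIV A)
       = (\<Prod>j\<in>UNIV. emeasure (density lborel std_normal_density) (A j))" .
  qed
qed


lemma gauss_prod_eq:
  "(\<Prod>j\<in>UNIV. std_normal_density ((x::real^'d::finite) $ j)) = (1 / sqrt (2 * pi)) ^ CARD('d) * exp (- (x \<bullet> x) / 2)"
proof -
  have "(\<Prod>j\<in>UNIV. std_normal_density (x $ j)) = (\<Prod>j\<in>UNIV. (1 / sqrt (2 * pi)) * exp (- (x $ j)\<^sup>2 / 2))"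
    by (simp add: std_normal_density_def)
  also have "\<dots> = (1 / sqrt (2 * pi)) ^ CARD('d) * (\<Prod>j\<in>UNIV. exp (- (x $ j)\<^sup>2 / 2))"
    by (subst prod.distrib) simp
  also have "(\<Prod>j\<in>UNIV. exp (- (x $ j)\<^sup>2 / 2)) = exp (\<Sum>j\<in>UNIV. - (x $ j)\<^sup>2 / 2)"
    by (simp add: exp_sum)
  also have "(\<Sum>j\<in>UNIV. - (x $ j)\<^sup>2 / 2) = - (x \<bullet> x) / 2"
    by (simp add: inner_vec_def power2_eq_square sum_negf sum_divide_distrib)
  finally show ?thesis .
qed

lemma gauss_dens_meas[measurable]:
  "(\<lambda>x::real^'d::finite. \<Prod>j\<in>UNIV. ennreal (std_normal_density (x $ j))) \<in> borel_measurable borel"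
proof -
  have "(\<lambda>x::real^'d::finite. \<Prod>j\<in>UNIV. ennreal (std_normal_density (x $ j))) =
        (\<lambda>x. ennreal ((1 / sqrt (2 * pi)) ^ CARD('d) * exp (- (x \<bullet> x) / 2)))"
    by (subst gauss_prod_eq[symmetric]) (simp add: prod_ennreal normal_density_nonneg)
  also have "\<dots> \<in> borel_measurable borel"
    by (intro measurable_compose[OF _ measurable_ennreal] borel_measurable_continuous_onI continuous_intros) auto
  finally show ?thesis .
qed

lemma std_gaussian_density:
  "std_gaussian TYPE('d::finite) = density lborel (\<lambda>x::real^'d. \<Prod>j\<in>UNIV. ennreal (std_normal_density (x $ j)))"
proof -
  have m[measurable]: "(\<lambda>f. (\<chi> j. f j) :: real^'d) \<in> measurable (PiM UNIV (\<lambda>_::'d. lborel)) borel"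
    by (rule vec_lambda_meas) simp
  have "std_gaussian TYPE('d) = distr (density (PiM UNIV (\<lambda>_. lborel)) (\<lambda>f. \<Prod>j\<in>UNIV. ennreal (std_normal_density (f j)))) borel (\<lambda>f. (\<chi> j. f j) :: real^'d)"
    unfolding std_gaussian_def PiM_std_density by simp
  also have "\<dots> = density (distr (PiM UNIV (\<lambda>_. lborel)) borel (\<lambda>f. (\<chi> j. f j) :: real^'d)) (\<lambda>x::real^'d. \<Prod>j\<in>UNIV. ennreal (std_normal_density (x $ j)))"
    by (subst density_distr) simp_all
  also have "\<dots> = density lborel (\<lambda>x::real^'d. \<Prod>j\<in>UNIV. ennreal (std_normal_density (x $ j)))"
    by (simp add: lborel_vec_PiM)
  finally show ?thesis .
qed

lemma std_gaussian_orth: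
  fixes T :: "real^'d::finite \<Rightarrow> real^'d"
  assumes T: "orthogonal_transformation T"
  shows "distr (std_gaussian TYPE('d)) borel T = std_gaussian TYPE('d)"
proof -
  have [measurable]: "T \<in> borel_measurable borel"
    using T orthogonal_transformation_linear linear_borel by blast
  have gT: "(\<Prod>j\<in>UNIV. ennreal (std_normal_density (T x $ j))) = (\<Prod>j\<in>UNIV. ennreal (std_normal_density (x $ j)))" for x
  proof -
    have "T x \<bullet> T x = x \<bullet> x" using T by (simp add: orthogonal_transformation_def)
    then show ?thesis
      by (simp add: prod_ennreal normal_density_nonneg gauss_prod_eq)
  qed
  have "distr (std_gaussian TYPE('d)) borel T = distr (density lborel (\<lambda>x. \<Prod>j\<in>UNIV. ennreal (std_normal_density (T x $ j)))) borel T"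
    unfolding std_gaussian_density gT ..
  also have "\<dots> = density (distr lborel borel T) (\<lambda>x::real^'d. \<Prod>j\<in>UNIV. ennreal (std_normal_density (x $ j)))"
    by (subst density_distr) simp_all
  also have "\<dots> = std_gaussian TYPE('d)"
    by (simp add: lborel_orth[OF T] std_gaussian_density)
  finally show ?thesis .
qed

lemma std_gaussian_coords:
  assumes A: "\<And>j. A j \<in> sets borel"
  shows "emeasure (std_gaussian TYPE('d::finite)) {x::real^'d. \<forall>j. x $ j \<in> A j} = (\<Prod>j\<in>UNIV. emeasure std_normal_distribution (A j))"
proof -
  interpret N: product_sigma_finite "\<lambda>_::'d. density lborel std_normal_density"
    unfolding product_sigma_finite_def
    using prob_space_normal_density[of 1 0] prob_space_imp_sigma_finite by simp
  have m[measurable]: "(\<lambda>f. (\<chi> j. f j) :: real^'d) \<in> measurable (PiM UNIV (\<lambda>_::'d. std_normal_distribution)) borel"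
    by (rule vec_lambda_meas) simp
  have Cs: "{x::real^'d. \<forall>j. x $ j \<in> A j} \<in> sets borel"
  proof -
    have "{x::real^'d. \<forall>j. x $ j \<in> A j} = (\<Inter>j. (\<lambda>x. x $ j) -` A j)" by auto
    also have "\<dots> \<in> sets borel"
    proof -
      have comp: "(\<lambda>x::real^'d. x $ j) \<in> borel_measurable borel" for j
      proof -
        have "linear (\<lambda>x::real^'d. x $ j)" by (intro linearI) simp_all
        then show ?thesis by (rule linear_borel)
      qed
      show ?thesis
      proof -
        have pj: "(\<lambda>x::real^'d. x $ j) -` A j \<in> sets borel" for j
          using measurable_sets_borel[OF comp A] .
        show ?thesis by (rule sets.countable_INT') (use pj in auto)
      qed
    qed
    finally show ?thesis .
  qed
  have pre: "(\<lambda>f. (\<chi> j. f j) :: real^'d) -` {x::real^'d. \<forall>j. x $ j \<in> A j} \<inter> space (PiM UNIV (\<lambda>_::'d. std_normal_distribution)) = PiE UNIV A"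
    by (auto simp: space_PiM PiE_iff)
  have "emeasure (std_gaussian TYPE('d)) {x::real^'d. \<forall>j. x $ j \<in> A j} = emeasure (PiM UNIV (\<lambda>_::'d. std_normal_distribution)) (PiE UNIV A)"
    unfolding std_gaussian_def emeasure_distr[OF m Cs] pre ..
  also have "\<dots> = (\<Prod>j\<in>UNIV. emeasure std_normal_distribution (A j))"
    using A by (intro N.emeasure_PiM) auto
  finally show ?thesis .
qed

lemma householder:
  fixes a b :: "'a::real_inner"
  assumes na: "norm a = 1" and nb: "norm b = 1"
  shows "\<exists>H. orthogonal_transformation H \<and> H a = b \<and> (\<forall>x. x \<bullet> a = x \<bullet> b \<longrightarrow> H x = x)"
proof (cases "a = b")
  case True
  then show ?thesis by (intro exI[of _ id]) (auto simp: orthogonal_transformation_def linear_id)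
next
  case False
  define v where "v = a - b"
  have vv: "v \<bullet> v \<noteq> 0" using False by (simp add: v_def)
  define H where "H x = x - (2 * (x \<bullet> v) / (v \<bullet> v)) *\<^sub>R v" for x
  have aa: "a \<bullet> a = 1" using na by (simp add: norm_eq_sqrt_inner)
  have bb: "b \<bullet> b = 1" using nb by (simp add: norm_eq_sqrt_inner)
  have lin: "linear H"
    unfolding H_def by (intro linearI) (simp_all add: inner_add_left algebra_simps add_divide_distrib)
  have ip: "H x \<bullet> H y = x \<bullet> y" for x y
  proof -
    have "H x \<bullet> H y = x \<bullet> y - 2 * (x \<bullet> v) * (y \<bullet> v) / (v \<bullet> v) - 2 * (y \<bullet> v) * (x \<bullet> v) / (v \<bullet> v)
         + 4 * (x \<bullet> v) * (y \<bullet> v) * (v \<bullet> v) / ((v \<bullet> v) * (v \<bullet> v))"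
      unfolding H_def by (simp add: inner_diff_left inner_diff_right inner_commute algebra_simps)
    also have "\<dots> = x \<bullet> y" using vv by (simp add: field_simps)
    finally show ?thesis .
  qed
  have "orthogonal_transformation H" unfolding orthogonal_transformation_def using lin ip by blast
  moreover have "H a = b"
  proof -
    have av: "a \<bullet> v = 1 - a \<bullet> b" unfolding v_def using aa by (simp add: inner_diff_right)
    have vv2: "v \<bullet> v = 2 * (1 - a \<bullet> b)" unfolding v_def using aa bb
      by (simp add: inner_diff_left inner_diff_right inner_commute)
    have "1 - a \<bullet> b \<noteq> 0"
    proof
      assume "1 - a \<bullet> b = 0"
      then have "v \<bullet> v = 0" using vv2 by simp
      with vv show False by simp
    qed
    then have c1: "2 * (a \<bullet> v) / (v \<bullet> v) = 1" using av vv2 by simp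
    have "H a = a - v" unfolding H_def c1 by simp
    then show ?thesis unfolding v_def by simp
  qed
  moreover have "\<forall>x. x \<bullet> a = x \<bullet> b \<longrightarrow> H x = x"
    unfolding H_def v_def by (simp add: inner_diff_right)
  ultimately show ?thesis by blast
qed


lemma orth_two:
  fixes w u :: "real^'d::finite"
  assumes nw: "norm w = 1" and nu: "norm u = 1" and wu: "w \<bullet> u = 0"
  obtains T and j1 j2 :: 'd where "orthogonal_transformation T" "T w = axis j1 (1::real)" "T u = axis j2 (1::real)" "j1 \<noteq> j2"
proof -
  fix j1 :: 'd
  obtain T1 where T1: "orthogonal_transformation T1" "T1 w = axis j1 (1::real)"
    using orthogonal_transformation_exists[of w "axis j1 (1::real)"] nw by (auto simp: norm_axis_1)
  define a :: "real^'d" where "a = T1 u"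
  have na: "norm a = 1" unfolding a_def using T1(1) nu by (simp add: orthogonal_transformation)
  have ae: "a $ j1 = 0"
  proof -
    have "a \<bullet> axis j1 (1::real) = u \<bullet> w" unfolding a_def T1(2)[symmetric] using T1(1) by (simp add: orthogonal_transformation_def)
    then show ?thesis using wu by (simp add: inner_axis inner_commute)
  qed
  have "a \<noteq> 0" using na by auto
  then obtain j2 where j2: "a $ j2 \<noteq> 0" by (auto simp: vec_eq_iff)
  have j12: "j1 \<noteq> j2" using j2 ae by auto
  obtain H where H: "orthogonal_transformation H" "H a = axis j2 (1::real)"
      "\<And>x. x \<bullet> a = x \<bullet> axis j2 (1::real) \<Longrightarrow> H x = x"
    using householder[OF na, of "axis j2 1"] by (auto simp: norm_axis_1)
  have "H (axis j1 (1::real)) = axis j1 1"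
  proof (rule H(3))
    have "axis j1 (1::real) \<bullet> a = a $ j1" by (simp add: inner_axis inner_commute)
    also have "\<dots> = axis j1 (1::real) \<bullet> axis j2 1" using ae j12 by (simp add: inner_axis_axis)
    finally show "axis j1 (1::real) \<bullet> a = axis j1 (1::real) \<bullet> axis j2 1" .
  qed
  then show ?thesis
    using that[of "H \<circ> T1" j1 j2] H T1 j12 unfolding a_def
    by (simp add: orthogonal_transformation_compose)
qed


lemma orth_one:
  fixes w :: "real^'d::finite"
  assumes nw: "norm w = 1"
  obtains T and j1 :: 'd where "orthogonal_transformation T" "T w = axis j1 (1::real)"
proof -
  obtain f where "orthogonal_transformation f" "f w = axis (undefined::'d) (1::real)"
    using orthogonal_transformation_exists[of w "axis (undefined::'d) (1::real)"] nw by (auto simp: norm_axis_1)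
  then show ?thesis by (rule that)
qed

lemma normal_interval_lb:
  assumes a: "0 < a"
  shows "ennreal (a * std_normal_density (2 * a)) \<le> emeasure std_normal_distribution {a..2*a}"
proof -
  have "ennreal (a * std_normal_density (2 * a)) = (\<integral>\<^sup>+ x. ennreal (std_normal_density (2 * a)) * indicator {a..2*a} x \<partial>lborel)"
    using a by (simp add: nn_integral_cmult_indicator ennreal_mult' normal_density_nonneg mult.commute)
  also have "\<dots> \<le> (\<integral>\<^sup>+ x. ennreal (std_normal_density x) * indicator {a..2*a} x \<partial>lborel)"
  proof (intro nn_integral_mono)
    fix x
    show "ennreal (std_normal_density (2 * a)) * indicator {a..2*a} x \<le> ennreal (std_normal_density x) * indicator {a..2*a} x"
    proof (cases "x \<in> {a..2*a}")
      case True
      then have "x\<^sup>2 \<le> (2 * a)\<^sup>2" using a by (intro power_mono) auto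
      then have "std_normal_density (2 * a) \<le> std_normal_density x"
        by (simp add: std_normal_density_def divide_right_mono)
      then show ?thesis using True by simp
    qed simp
  qed
  also have "\<dots> = emeasure std_normal_distribution {a..2*a}"
    by (simp add: emeasure_density)
  finally show ?thesis .
qed

lemma num_bounds:
  fixes \<gamma> R :: real
  assumes g0: "0 < \<gamma>" and g1: "\<gamma> \<le> 1/2" and R2: "R \<ge> 2"
  defines "s \<equiv> sqrt (ln (1/\<gamma>))"
  shows "\<gamma> powr (28 + 6 * R\<^sup>2) \<le> (R * s) * std_normal_density (2 * (R * s))"
    and "\<gamma> powr (28 + 6 * R\<^sup>2) \<le> ((R * s) * std_normal_density (2 * (R * s))) * ((2 * s) * std_normal_density (2 * (2 * s)))"
proof -
  define L where "L = ln (1/\<gamma>)"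
  have lg: "ln \<gamma> = - L" unfolding L_def using g0 by (simp add: ln_div)
  have L2: "1/2 \<le> L"
  proof -
    have "ln (1/2::real) \<le> 1/2 - 1" by (rule ln_le_minus_one) simp
    then have h: "1/2 \<le> ln (2::real)" by (simp add: ln_div)
    have "ln 2 \<le> L" unfolding L_def using g0 g1 by (subst ln_le_cancel_iff) (auto simp: field_simps)
    with h show ?thesis by linarith
  qed
  have s0: "0 < s" using L2 by (simp add: s_def L_def[symmetric])
  have ss: "s\<^sup>2 = L" using L2 by (simp add: s_def L_def[symmetric])
  define c where "c = 1 / sqrt (2 * pi)"
  have c0: "0 < c" by (simp add: c_def)
  have pw: "exp (- (a * L)) = \<gamma> powr a" for a
    using g0 by (simp add: powr_def lg)
  have e1: "std_normal_density (2 * (R * s)) = c * \<gamma> powr (2 * R\<^sup>2)"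
  proof -
    have h: "(2 * (R * s))\<^sup>2 = 2 * (2 * R\<^sup>2) * L" by (simp add: power_mult_distrib ss[symmetric])
    have "std_normal_density (2 * (R * s)) = c * exp (- (2 * (2 * R\<^sup>2) * L) / 2)"
      unfolding std_normal_density_def c_def h ..
    also have "\<dots> = c * exp (- ((2 * R\<^sup>2) * L))" by simp
    finally show ?thesis using pw by simp
  qed
  have e2: "std_normal_density (2 * (2 * s)) = c * \<gamma> powr 8"
  proof -
    have h: "(2 * (2 * s))\<^sup>2 = 2 * 8 * L" by (simp add: power_mult_distrib ss[symmetric])
    have "std_normal_density (2 * (2 * s)) = c * exp (- (2 * 8 * L) / 2)"
      unfolding std_normal_density_def c_def h ..
    also have "\<dots> = c * exp (- (8 * L))" by simp
    finally show ?thesis using pw by simp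
  qed
  define X where "X = R * s * c"
  define Y where "Y = 2 * s * c"
  have Y0: "0 < Y" using s0 c0 by (simp add: Y_def)
  have YY: "Y\<^sup>2 = 2 * L / pi"
    unfolding Y_def c_def using ss by (simp add: power_mult_distrib power_divide)
  have "1/4 \<le> Y\<^sup>2"
  proof -
    have "1 / pi \<le> 2 * L / pi" using L2 by (simp add: divide_right_mono)
    moreover have "1/4 \<le> 1 / pi" using pi_less_4 pi_gt_zero by (simp add: field_simps)
    ultimately show ?thesis using YY by linarith
  qed
  then have "(1/2)\<^sup>2 \<le> Y\<^sup>2" by (simp add: power2_eq_square)
  then have Yh: "1/2 \<le> Y"
    using Y0 power2_le_imp_le[of "1/2" Y] by linarith
  have XY: "Y \<le> X"
  proof -
    have "2 * s \<le> R * s" using R2 s0 by (intro mult_right_mono) auto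
    then show ?thesis unfolding X_def Y_def by (rule mult_right_mono) (use c0 in auto)
  qed
  have gR: "0 < \<gamma> powr (2 * R\<^sup>2)" "0 < \<gamma> powr 8" using g0 by simp_all
  have g8: "\<gamma> powr 8 \<le> 1" using g0 g1 by (intro powr_le1) auto
  have split: "\<gamma> powr (28 + 6 * R\<^sup>2) = \<gamma> powr (2 * R\<^sup>2) * \<gamma> powr 8 * \<gamma> powr (20 + 4 * R\<^sup>2)"
  proof -
    have "28 + 6 * R\<^sup>2 = 2 * R\<^sup>2 + 8 + (20 + 4 * R\<^sup>2)" by simp
    then show ?thesis by (simp only: powr_add)
  qed
  have rest: "\<gamma> powr (20 + 4 * R\<^sup>2) \<le> 1/4"
  proof -
    have "\<gamma> powr (20 + 4 * R\<^sup>2) \<le> \<gamma> powr 2" using g0 g1 by (intro powr_mono') (auto intro: add_nonneg_nonneg)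
    also have "\<dots> = \<gamma>\<^sup>2" using g0 by (simp add: powr_numeral)
    also have "\<dots> \<le> (1/2)\<^sup>2" using g0 g1 by (intro power_mono) auto
    finally show ?thesis by (simp add: power2_eq_square)
  qed
  have r0: "0 \<le> \<gamma> powr (20 + 4 * R\<^sup>2)" by simp
  show "\<gamma> powr (28 + 6 * R\<^sup>2) \<le> (R * s) * std_normal_density (2 * (R * s))"
  proof -
    have "\<gamma> powr (28 + 6 * R\<^sup>2) \<le> \<gamma> powr (2 * R\<^sup>2) * 1 * X"
      unfolding split using gR g8 rest Yh XY r0
      by (intro mult_mono) auto
    also have "\<dots> = (R * s) * std_normal_density (2 * (R * s))" unfolding e1 X_def by simp
    finally show ?thesis .
  qed
  show "\<gamma> powr (28 + 6 * R\<^sup>2) \<le> ((R * s) * std_normal_density (2 * (R * s))) * ((2 * s) * std_normal_density (2 * (2 * s)))"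
  proof -
    have "Y * Y \<le> X * Y" using XY Y0 by (intro mult_right_mono) auto
    then have "1/4 \<le> X * Y" using \<open>1/4 \<le> Y\<^sup>2\<close> by (simp add: power2_eq_square)
    then have "\<gamma> powr (28 + 6 * R\<^sup>2) \<le> \<gamma> powr (2 * R\<^sup>2) * \<gamma> powr 8 * (X * Y)"
      unfolding split using gR rest r0 by (intro mult_left_mono) auto
    also have "\<dots> = ((R * s) * std_normal_density (2 * (R * s))) * ((2 * s) * std_normal_density (2 * (2 * s)))"
      unfolding e1 e2 X_def Y_def by (simp add: algebra_simps)
    finally show ?thesis .
  qed
qed

lemma coords_sets:
  assumes A: "\<And>j. A j \<in> sets borel"
  shows "{x::real^'d::finite. \<forall>j. x $ j \<in> A j} \<in> sets borel"
proof -
  have comp: "(\<lambda>x::real^'d. x $ j) \<in> borel_measurable borel" for j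
  proof -
    have "linear (\<lambda>x::real^'d. x $ j)" by (intro linearI) simp_all
    then show ?thesis by (rule linear_borel)
  qed
  have pj: "(\<lambda>x::real^'d. x $ j) -` A j \<in> sets borel" for j
    using measurable_sets_borel[OF comp A] .
  have "{x::real^'d. \<forall>j. x $ j \<in> A j} = (\<Inter>j. (\<lambda>x. x $ j) -` A j)" by auto
  also have "\<dots> \<in> sets borel" by (rule sets.countable_INT') (use pj in auto)
  finally show ?thesis .
qed

lemma std_gaussian_prob: "prob_space (std_gaussian TYPE('d::finite))"
proof (rule prob_spaceI)
  have Np: "prob_space std_normal_distribution" using prob_space_normal_density[of 1 0] by simp
  have "emeasure (std_gaussian TYPE('d)) {x::real^'d. \<forall>j. x $ j \<in> UNIV} = (\<Prod>j\<in>(UNIV::'d set). emeasure std_normal_distribution UNIV)"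
    by (rule std_gaussian_coords) simp
  also have "\<dots> = 1" using prob_space.emeasure_space_1[OF Np] by simp
  finally show "emeasure (std_gaussian TYPE('d)) (space (std_gaussian TYPE('d))) = 1"
    by (simp add: std_gaussian_def)
qed

lemma std_gaussian_orth_measure:
  fixes T :: "real^'d::finite \<Rightarrow> real^'d"
  assumes T: "orthogonal_transformation T" and C: "C \<in> sets borel"
  shows "measure (std_gaussian TYPE('d)) (T -` C) = measure (std_gaussian TYPE('d)) C"
proof -
  have sp: "space (std_gaussian TYPE('d)) = UNIV" by (simp add: std_gaussian_def)
  have Tb: "T \<in> borel_measurable borel"
    using T orthogonal_transformation_linear linear_borel by blast
  have eq: "measurable (std_gaussian TYPE('d)) borel = measurable borel borel"
    by (rule measurable_cong_sets) (simp_all add: std_gaussian_def)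
  have Tm: "T \<in> measurable (std_gaussian TYPE('d)) borel" using Tb unfolding eq .
  have "measure (std_gaussian TYPE('d)) C = measure (distr (std_gaussian TYPE('d)) borel T) C"
    by (simp add: std_gaussian_orth[OF T])
  also have "\<dots> = measure (std_gaussian TYPE('d)) (T -` C \<inter> space (std_gaussian TYPE('d)))"
    by (rule measure_distr[OF Tm C])
  finally show ?thesis by (simp add: sp)
qed

lemma ennreal_lb_measure:
  assumes "ennreal b \<le> emeasure (std_gaussian TYPE('d::finite)) C"
  shows "b \<le> measure (std_gaussian TYPE('d)) C"
proof -
  interpret prob_space "std_gaussian TYPE('d)" by (rule std_gaussian_prob)
  show ?thesis
  proof (cases "C \<in> sets (std_gaussian TYPE('d))")
    case True
    then have "ennreal b \<le> ennreal (measure (std_gaussian TYPE('d)) C)"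
      using assms by (simp add: emeasure_eq_measure)
    then show ?thesis
      using measure_nonneg[of "std_gaussian TYPE('d)" C] by (simp add: ennreal_le_iff2) linarith
  next
    case False
    then have "emeasure (std_gaussian TYPE('d)) C = 0" by (simp add: emeasure_notin_sets)
    then have "b \<le> 0" using assms by (simp add: ennreal_eq_0_iff)
    then show ?thesis by (simp add: measure_nonneg order.trans)
  qed
qed

theorem lemma5p3:
  fixes V W :: "real^'k^'d" and i :: 'k and \<gamma> R :: real
  assumes "column i W \<noteq> 0" and "0 < \<gamma>" and "\<gamma> \<le> 1/2" and "R \<ge> 2"
  defines "wh \<equiv> (1 / norm (column i W)) *\<^sub>R column i W"
  defines "u \<equiv> column i V - (column i V \<bullet> wh) *\<^sub>R wh"
  defines "uh \<equiv> (1 / norm u) *\<^sub>R u"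
  defines "E \<equiv> {x :: real^'d.
      1 \<le> (x \<bullet> wh) / (R * sqrt (ln (1/\<gamma>))) \<and> (x \<bullet> wh) / (R * sqrt (ln (1/\<gamma>))) \<le> 2 \<and>
      (u \<noteq> 0 \<longrightarrow> 1 \<le> (x \<bullet> uh) / (2 * sqrt (ln (1/\<gamma>))) \<and> (x \<bullet> uh) / (2 * sqrt (ln (1/\<gamma>))) \<le> 2)}"
  shows "measure (std_gaussian TYPE('d)) E \<ge> \<gamma> powr (28 + 6 * R\<^sup>2)"
proof -
  define s where "s = sqrt (ln (1/\<gamma>))"
  have "1 < 1/\<gamma>" using assms(2,3) by (simp add: field_simps)
  then have "0 < ln (1/\<gamma>)" by (rule ln_gt_zero)
  then have s0: "0 < s" unfolding s_def by simp
  define c1 where "c1 = R * s"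
  define c2 where "c2 = 2 * s"
  have c10: "0 < c1" unfolding c1_def using s0 assms(4) by simp
  have c20: "0 < c2" unfolding c2_def using s0 by simp
  have Eeq: "E = {x. c1 \<le> x \<bullet> wh \<and> x \<bullet> wh \<le> 2 * c1 \<and> (u \<noteq> 0 \<longrightarrow> c2 \<le> x \<bullet> uh \<and> x \<bullet> uh \<le> 2 * c2)}"
    unfolding E_def s_def[symmetric] c1_def[symmetric] c2_def[symmetric]
    using c10 c20 by (simp add: le_divide_eq divide_le_eq mult.commute)
  have nwh: "norm wh = 1" unfolding wh_def using assms(1) by simp
  have Np: "prob_space std_normal_distribution" using prob_space_normal_density[of 1 0] by simp
  have NU: "emeasure std_normal_distribution UNIV = 1" using prob_space.emeasure_space_1[OF Np] by simp
  show ?thesis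
  proof (cases "u = 0")
    case True
    obtain T and j1 :: 'd where T: "orthogonal_transformation T" "T wh = axis j1 (1::real)"
      using orth_one[OF nwh] by blast
    have tx: "T x $ j1 = x \<bullet> wh" for x
    proof -
      have "T x \<bullet> T wh = x \<bullet> wh" using T(1) by (simp add: orthogonal_transformation_def)
      then show ?thesis using T(2) by (simp add: inner_axis)
    qed
    define A where "A j = (if j = j1 then {c1..2*c1} else (UNIV :: real set))" for j
    have Ab: "A j \<in> sets borel" for j unfolding A_def by simp
    have ET: "E = T -` {y. \<forall>j. y $ j \<in> A j}"
    proof -
      have "(\<forall>j. T x $ j \<in> A j) \<longleftrightarrow> T x $ j1 \<in> {c1..2*c1}" for x
        unfolding A_def by (metis UNIV_I)
      then show ?thesis unfolding Eeq using True tx by auto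
    qed
    have "emeasure (std_gaussian TYPE('d)) {y. \<forall>j. y $ j \<in> A j} = (\<Prod>j\<in>UNIV. emeasure std_normal_distribution (A j))"
      by (rule std_gaussian_coords[OF Ab])
    also have "\<dots> = (\<Prod>j\<in>UNIV. if j = j1 then emeasure std_normal_distribution {c1..2*c1} else 1)"
      by (intro prod.cong refl) (simp add: A_def NU)
    also have "\<dots> = emeasure std_normal_distribution {c1..2*c1}"
      by (simp add: prod.delta)
    finally have "ennreal (c1 * std_normal_density (2 * c1)) \<le> emeasure (std_gaussian TYPE('d)) {y. \<forall>j. y $ j \<in> A j}"
      using normal_interval_lb[OF c10] by simp
    then have "c1 * std_normal_density (2 * c1) \<le> measure (std_gaussian TYPE('d)) {y. \<forall>j. y $ j \<in> A j}"
      by (rule ennreal_lb_measure)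
    also have "\<dots> = measure (std_gaussian TYPE('d)) E"
      unfolding ET by (rule std_gaussian_orth_measure[OF T(1) coords_sets[OF Ab], symmetric])
    finally show ?thesis
      using num_bounds(1)[OF assms(2,3,4)] unfolding c1_def s_def by linarith
  next
    case False
    have uwh: "u \<bullet> wh = 0"
      unfolding u_def using nwh by (simp add: inner_diff_left norm_eq_sqrt_inner)
    have nuh: "norm uh = 1" unfolding uh_def using False by simp
    have wu: "wh \<bullet> uh = 0" unfolding uh_def using uwh by (simp add: inner_commute)
    obtain T and j1 j2 :: 'd where T: "orthogonal_transformation T" "T wh = axis j1 (1::real)"
        "T uh = axis j2 (1::real)" "j1 \<noteq> j2"
      using orth_two[OF nwh nuh wu] by blast
    have tx: "T x $ j1 = x \<bullet> wh" "T x $ j2 = x \<bullet> uh" for x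
    proof -
      have "T x \<bullet> T wh = x \<bullet> wh" "T x \<bullet> T uh = x \<bullet> uh" using T(1) by (simp_all add: orthogonal_transformation_def)
      then show "T x $ j1 = x \<bullet> wh" "T x $ j2 = x \<bullet> uh" using T(2,3) by (simp_all add: inner_axis)
    qed
    define A where "A j = (if j = j1 then {c1..2*c1} else if j = j2 then {c2..2*c2} else (UNIV :: real set))" for j
    have Ab: "A j \<in> sets borel" for j unfolding A_def by simp
    have ET: "E = T -` {y. \<forall>j. y $ j \<in> A j}"
    proof -
      have "(\<forall>j. T x $ j \<in> A j) \<longleftrightarrow> T x $ j1 \<in> {c1..2*c1} \<and> T x $ j2 \<in> {c2..2*c2}" for x
        unfolding A_def using T(4) by (metis UNIV_I)
      then show ?thesis unfolding Eeq using False tx by auto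
    qed
    let ?N1 = "emeasure std_normal_distribution {c1..2*c1}"
    let ?N2 = "emeasure std_normal_distribution {c2..2*c2}"
    have "emeasure (std_gaussian TYPE('d)) {y. \<forall>j. y $ j \<in> A j} = (\<Prod>j\<in>UNIV. emeasure std_normal_distribution (A j))"
      by (rule std_gaussian_coords[OF Ab])
    also have "\<dots> = emeasure std_normal_distribution (A j1) * (\<Prod>j\<in>UNIV - {j1}. emeasure std_normal_distribution (A j))"
      by (simp add: prod.remove)
    also have "(\<Prod>j\<in>UNIV - {j1}. emeasure std_normal_distribution (A j)) = emeasure std_normal_distribution (A j2) * (\<Prod>j\<in>UNIV - {j1} - {j2}. emeasure std_normal_distribution (A j))"
      using T(4) by (subst prod.remove[of _ j2]) auto
    also have "(\<Prod>j\<in>UNIV - {j1} - {j2}. emeasure std_normal_distribution (A j)) = 1"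
      by (intro prod.neutral) (simp add: A_def NU)
    finally have "emeasure (std_gaussian TYPE('d)) {y. \<forall>j. y $ j \<in> A j} = ?N1 * ?N2"
      using T(4) by (simp add: A_def)
    moreover have "ennreal (c1 * std_normal_density (2 * c1)) * ennreal (c2 * std_normal_density (2 * c2)) \<le> ?N1 * ?N2"
      using normal_interval_lb[OF c10] normal_interval_lb[OF c20] by (intro mult_mono) auto
    ultimately have "ennreal ((c1 * std_normal_density (2 * c1)) * (c2 * std_normal_density (2 * c2))) \<le> emeasure (std_gaussian TYPE('d)) {y. \<forall>j. y $ j \<in> A j}"
      using c10 c20 by (simp add: ennreal_mult normal_density_nonneg)
    then have "(c1 * std_normal_density (2 * c1)) * (c2 * std_normal_density (2 * c2)) \<le> measure (std_gaussian TYPE('d)) {y. \<forall>j. y $ j \<in> A j}"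
      by (rule ennreal_lb_measure)
    also have "\<dots> = measure (std_gaussian TYPE('d)) E"
      unfolding ET by (rule std_gaussian_orth_measure[OF T(1) coords_sets[OF Ab], symmetric])
    finally show ?thesis
      using num_bounds(2)[OF assms(2,3,4)] unfolding c1_def c2_def s_def by linarith
  qed
qed

end
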